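(* If $g\in\mathcal{G}_0^0\cup\mathcal{G}_0^{sh}$, then for every finite measurable partition $\mathcal{P}$ we have $h(g,\mathcal{P})=C(g)\cdot h(\mathcal{P})$. Here $C(g)=\lim_{x\to0^+}g(x)/\eta(x)$ and $h(\mathcal{P})=h(\eta,\mathcal{P})$ is the Shannon dynamical entropy.
   Context: $\mathcal{G}_0$ is the set of concave functions $g:[0,1]\to\mathbb{R}$ with $g(0)=\lim_{x\to0^+}g(x)=0$. Let $\eta(x)=-x\log x$ and $\eta(0)=0$. Define $\mathcal{G}_0^0=\{g\in\mathcal{G}_0:\lim_{x\to0^+}g(x)/\eta(x)=0\}$ and $\mathcal{G}_0^{sh}=\{g\in\mathcal{G}_0:0<\lim_{x\to0^+}g(x)/\eta(x)<\infty\}$. $T$ is a measure-preserving map of a probability space $(X,\Sigma,\mu)$. For a finite measurable partition $\mathcal{P}$, let $\mathcal{P}_n=\bigvee_{i=0}^{n-1}T^{-i}\mathcal{P}$, $H(g,\mathcal{P})=\sum_{A\in\mathcal{P}}g(\mu(A))$, and $h(g,\mathcal{P})=\limsup_{n\to\infty}\frac1nH(g,\mathcal{P}_n)$. *)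

theory Defs
  imports "HOL-Probability.Probability"
begin

definition eta :: "real \<Rightarrow> real" where
  "eta x = (if x = 0 then 0 else - x * ln x)"

definition G0 :: "(real \<Rightarrow> real) set" where
  "G0 = {g. concave_on {0..1} g \<and> g 0 = 0 \<and> (g \<longlongrightarrow> 0) (at_right 0)}"

definition G00 :: "(real \<Rightarrow> real) set" where
  "G00 = {g \<in> G0. ((\<lambda>x. g x / eta x) \<longlongrightarrow> 0) (at_right 0)}"

definition Gsh :: "(real \<Rightarrow> real) set" where
  "Gsh = {g \<in> G0. \<exists>c. 0 < c \<and> ((\<lambda>x. g x / eta x) \<longlongrightarrow> c) (at_right 0)}"

definition Cg :: "(real \<Rightarrow> real) \<Rightarrow> real" where
  "Cg g = Lim (at_right 0) (\<lambda>x. g x / eta x)"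

definition measure_preserving_map :: "'a measure \<Rightarrow> ('a \<Rightarrow> 'a) \<Rightarrow> bool" where
  "measure_preserving_map M T \<longleftrightarrow> T \<in> M \<rightarrow>\<^sub>M M \<and>
     (\<forall>A \<in> sets M. measure M (T -` A \<inter> space M) = measure M A)"

definition finite_meas_partition :: "'a measure \<Rightarrow> 'a set set \<Rightarrow> bool" where
  "finite_meas_partition M P \<longleftrightarrow> finite P \<and> P \<subseteq> sets M \<and> \<Union>P = space M \<and>
     disjoint P"

text \<open>P_n = join of T^{-i} P for i = 0..n-1 (sets are the intersections, empty ones included).\<close>
definition join_part :: "'a measure \<Rightarrow> ('a \<Rightarrow> 'a) \<Rightarrow> 'a set set \<Rightarrow> nat \<Rightarrow> 'a set set" where
  "join_part M T P n = {space M \<inter> (\<Inter>i<n. (T ^^ i) -` (f i)) | f. \<forall>i<n. f i \<in> P}"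

definition Hg :: "'a measure \<Rightarrow> (real \<Rightarrow> real) \<Rightarrow> 'a set set \<Rightarrow> real" where
  "Hg M g P = (\<Sum>A\<in>P. g (measure M A))"

definition hg :: "'a measure \<Rightarrow> ('a \<Rightarrow> 'a) \<Rightarrow> (real \<Rightarrow> real) \<Rightarrow> 'a set set \<Rightarrow> ereal" where
  "hg M T g P = limsup (\<lambda>n. ereal (Hg M g (join_part M T P n) / real n))"

end

theory Submission
  imports Defs
begin
lemma eta_nonneg: "0 \<le> x \<Longrightarrow> x \<le> 1 \<Longrightarrow> 0 \<le> eta x"
  unfolding eta_def using ln_le_zero_iff[of x]
  by (auto simp: mult_nonneg_nonpos)

lemma eta_pos: "0 < x \<Longrightarrow> x < 1 \<Longrightarrow> 0 < eta x"
  unfolding eta_def by (simp add: mult_pos_neg)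

lemma negylny: "0 \<le> (y::real) \<Longrightarrow> - y * ln y \<le> 1"
proof (cases "y = 0")
  case False
  assume "0 \<le> y" with False have y: "y > 0" by simp
  have "ln (1/y) \<le> 1/y - 1" using y by (intro ln_le_minus_one) simp
  hence "- ln y \<le> 1/y - 1" using y by (simp add: ln_div)
  hence "y * (- ln y) \<le> y * (1/y - 1)" using y by (intro mult_left_mono) auto
  moreover have "y * (1/y - 1) = 1 - y" using y by (simp add: field_simps)
  ultimately show ?thesis using y by simp
qed simp

lemma eta_bound: assumes "0 \<le> x" "(k::real) > 0" shows "eta x \<le> x * ln k + 1 / k"
proof (cases "x = 0")
  case True thus ?thesis using assms by (simp add: eta_def)
next
  case False
  hence x: "x > 0" using assms by simp
  have "- (k*x) * ln (k*x) \<le> 1" using assms by (intro negylny) simp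
  hence "(- (k*x) * ln (k*x)) / k \<le> 1 / k" using assms by (intro divide_right_mono) auto
  moreover have "(- (k*x) * ln (k*x)) / k = - x * ln x - x * ln k"
    using x assms by (simp add: ln_mult field_simps)
  ultimately show ?thesis using x by (simp add: eta_def)
qed

lemma sum_eta_bound:
  assumes "finite Q" "\<And>A. A \<in> Q \<Longrightarrow> 0 \<le> m A" "(\<Sum>A\<in>Q. m A) \<le> 1" "Q \<noteq> {}"
  shows "(\<Sum>A\<in>Q. eta (m A)) \<le> ln (card Q) + 1"
proof -
  define k where "k = real (card Q)"
  have k: "k \<ge> 1" using assms by (simp add: k_def Suc_leI card_gt_0_iff)
  have "(\<Sum>A\<in>Q. eta (m A)) \<le> (\<Sum>A\<in>Q. m A * ln k + 1 / k)"
    using k assms by (intro sum_mono eta_bound) auto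
  also have "\<dots> = (\<Sum>A\<in>Q. m A) * ln k + 1"
    using k by (simp add: sum.distrib sum_distrib_right k_def)
  also have "\<dots> \<le> 1 * ln k + 1"
    using k assms by (intro add_right_mono mult_right_mono) auto
  finally show ?thesis by (simp add: k_def)
qed

lemma concave_bound:
  assumes "concave_on {0..1} g" "g 0 = 0" "0 < d" "d < 1" "d \<le> x" "x \<le> 1"
  shows "\<bar>g x\<bar> \<le> \<bar>g d\<bar> / d + \<bar>g 1\<bar>"
proof -
  have x: "x > 0" using assms by simp
  have "(1 - d/x) * g 0 + (d/x) * g x \<le> g ((1 - d/x) *\<^sub>R 0 + (d/x) *\<^sub>R x)"
    using assms x by (intro concave_onD[OF assms(1)]) auto
  hence "(d/x) * g x \<le> g d" using x assms by simp
  hence "x * ((d/x) * g x) \<le> x * g d" using x by (intro mult_left_mono) auto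
  hence "d * g x \<le> x * g d" using x by simp
  hence up: "g x \<le> x * g d / d" using assms by (simp add: field_simps)
  have "x * g d / d \<le> \<bar>g d\<bar> / d"
  proof -
    have "x * g d \<le> x * \<bar>g d\<bar>" using x by (intro mult_left_mono) auto
    also have "\<dots> \<le> \<bar>g d\<bar>" using assms x by (intro mult_left_le_one_le) auto
    finally have "x * g d \<le> \<bar>g d\<bar>" .
    thus ?thesis using assms by (intro divide_right_mono) auto
  qed
  with up have up2: "g x \<le> \<bar>g d\<bar> / d" by simp
  define t where "t = (x - d) / (1 - d)"
  have t: "0 \<le> t" "t \<le> 1" using assms by (auto simp: t_def field_simps)
  have td: "t * (1 - d) = x - d" using assms by (simp add: t_def)
  have "(1 - t) * d + t = d + t * (1 - d)" by (simp add: algebra_simps)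
  hence xe: "(1 - t) *\<^sub>R d + t *\<^sub>R 1 = x" using td by simp
  have "(1 - t) * g d + t * g 1 \<le> g x"
    using concave_onD[OF assms(1) t, of d 1] assms xe by auto
  moreover have "(1 - t) * g d + t * g 1 \<ge> - (\<bar>g d\<bar> + \<bar>g 1\<bar>)"
  proof -
    have "\<bar>(1 - t) * g d\<bar> \<le> \<bar>g d\<bar>" using t
      by (simp add: abs_mult mult_left_le_one_le)
    moreover have "\<bar>t * g 1\<bar> \<le> \<bar>g 1\<bar>" using t
      by (simp add: abs_mult mult_left_le_one_le)
    ultimately show ?thesis by linarith
  qed
  moreover have "\<bar>g d\<bar> \<le> \<bar>g d\<bar> / d" using assms by (simp add: le_divide_eq mult_right_le_one_le)
  ultimately show ?thesis using up2 by linarith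
qed


lemma eta_le1: "0 \<le> x \<Longrightarrow> eta x \<le> 1"
  unfolding eta_def using negylny[of x] by auto

lemma approx:
  assumes "g \<in> G0" "((\<lambda>x. g x / eta x) \<longlongrightarrow> c) (at_right 0)" "e > 0"
  shows "\<exists>L. \<forall>x\<in>{0..1}. \<bar>g x - c * eta x\<bar> \<le> e * eta x + L * x"
proof -
  have conc: "concave_on {0..1} g" and g0: "g 0 = 0" using assms(1) by (auto simp: G0_def)
  have "eventually (\<lambda>x. dist (g x / eta x) c < e) (at_right 0)"
    using tendstoD[OF assms(2,3)] .
  then obtain b where b: "b > 0" "\<And>y. y > 0 \<Longrightarrow> y < b \<Longrightarrow> dist (g y / eta y) c < e"
    unfolding eventually_at_right_field by auto
  define d where "d = min b (1/2)"
  have d: "0 < d" "d < 1" "d \<le> b" using b by (auto simp: d_def)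
  define K where "K = \<bar>g d\<bar> / d + \<bar>g 1\<bar> + \<bar>c\<bar>"
  have K0: "K \<ge> 0" using d by (simp add: K_def)
  define L where "L = K / d"
  have L0: "L \<ge> 0" using K0 d by (simp add: L_def)
  show ?thesis
  proof (intro exI ballI)
    fix x :: real assume x: "x \<in> {0..1}"
    have en: "0 \<le> eta x" using x eta_nonneg by auto
    have Lx: "0 \<le> L * x" using L0 x by simp
    consider "x = 0" | "0 < x" "x < d" | "d \<le> x" using x by force
    then show "\<bar>g x - c * eta x\<bar> \<le> e * eta x + L * x"
    proof cases
      case 1 thus ?thesis using g0 by (simp add: eta_def)
    next
      case 2
      have ep: "eta x > 0" using 2 d by (intro eta_pos) auto
      have "\<bar>g x / eta x - c\<bar> < e" using b(2)[of x] 2 d by (simp add: dist_real_def)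
      hence "eta x * \<bar>g x / eta x - c\<bar> \<le> eta x * e" using ep by (intro mult_left_mono) auto
      moreover have "eta x * \<bar>g x / eta x - c\<bar> = \<bar>eta x * (g x / eta x - c)\<bar>"
        using ep by (simp add: abs_mult)
      moreover have "eta x * (g x / eta x - c) = g x - c * eta x" using ep by (simp add: field_simps)
      ultimately show ?thesis using Lx by (simp add: mult.commute)
    next
      case 3
      have "\<bar>g x\<bar> \<le> \<bar>g d\<bar> / d + \<bar>g 1\<bar>" using concave_bound[OF conc g0 d(1,2) 3] x by auto
      moreover have "\<bar>c * eta x\<bar> \<le> \<bar>c\<bar>"
        using en eta_le1[of x] x by (simp add: abs_mult mult_right_le_one_le)
      ultimately have "\<bar>g x - c * eta x\<bar> \<le> K" unfolding K_def by linarith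
      also have "K \<le> L * x"
      proof -
        have "K * 1 \<le> K * (x / d)" using K0 3 d by (intro mult_left_mono) auto
        thus ?thesis by (simp add: L_def)
      qed
      finally show ?thesis using en assms(3) by (smt (verit) mult_nonneg_nonneg)
    qed
  qed
qed

lemma join_part_eq:
  "join_part M T P n = (\<lambda>f. space M \<inter> (\<Inter>i<n. (T ^^ i) -` f i)) ` (PiE {..<n} (\<lambda>_. P))"
proof (rule set_eqI)
  fix A
  show "A \<in> join_part M T P n \<longleftrightarrow> A \<in> (\<lambda>f. space M \<inter> (\<Inter>i<n. (T ^^ i) -` f i)) ` (PiE {..<n} (\<lambda>_. P))"
  proof
    assume "A \<in> join_part M T P n"
    then obtain f where f: "A = space M \<inter> (\<Inter>i<n. (T ^^ i) -` f i)" "\<forall>i<n. f i \<in> P"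
      unfolding join_part_def by auto
    have "restrict f {..<n} \<in> PiE {..<n} (\<lambda>_. P)" using f(2) by auto
    moreover have "A = space M \<inter> (\<Inter>i<n. (T ^^ i) -` (restrict f {..<n}) i)" using f(1) by simp
    ultimately show "A \<in> (\<lambda>f. space M \<inter> (\<Inter>i<n. (T ^^ i) -` f i)) ` (PiE {..<n} (\<lambda>_. P))" by blast
  next
    assume "A \<in> (\<lambda>f. space M \<inter> (\<Inter>i<n. (T ^^ i) -` f i)) ` (PiE {..<n} (\<lambda>_. P))"
    thus "A \<in> join_part M T P n" unfolding join_part_def by (auto simp: PiE_def Pi_def)
  qed
qed

lemma join_part_finite:
  assumes "finite P"
  shows "finite (join_part M T P n)" "card (join_part M T P n) \<le> card P ^ n"
proof -
  have fin: "finite (PiE {..<n} (\<lambda>_. P))" using assms by (intro finite_PiE) auto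
  thus "finite (join_part M T P n)" unfolding join_part_eq by simp
  have "card (join_part M T P n) \<le> card (PiE {..<n} (\<lambda>_. P))"
    unfolding join_part_eq using fin by (rule card_image_le)
  also have "\<dots> = card P ^ n" by (simp add: card_PiE)
  finally show "card (join_part M T P n) \<le> card P ^ n" .
qed

lemma funpow_meas: "T \<in> M \<rightarrow>\<^sub>M M \<Longrightarrow> T ^^ i \<in> M \<rightarrow>\<^sub>M M"
proof (induction i)
  case 0 thus ?case by simp
next
  case (Suc i)
  have "T ^^ Suc i = T \<circ> T ^^ i" by simp
  thus ?case using Suc measurable_comp by metis
qed

lemma join_part_sets:
  assumes "T \<in> M \<rightarrow>\<^sub>M M" "P \<subseteq> sets M"
  shows "join_part M T P n \<subseteq> sets M"
proof
  fix A assume "A \<in> join_part M T P n"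
  then obtain f where f: "A = space M \<inter> (\<Inter>i<n. (T ^^ i) -` f i)" "\<forall>i<n. f i \<in> P"
    unfolding join_part_def by auto
  have pre: "(T ^^ i) -` f i \<inter> space M \<in> sets M" if "i < n" for i
    using funpow_meas[OF assms(1)] f(2) that assms(2) by (intro measurable_sets) auto
  show "A \<in> sets M"
  proof (cases "n = 0")
    case True thus ?thesis using f by simp
  next
    case False
    have "A = (\<Inter>i\<in>{..<n}. (T ^^ i) -` f i \<inter> space M)" using f False by auto
    also have "\<dots> \<in> sets M" using False pre by (intro sets.finite_INT) auto
    finally show ?thesis .
  qed
qed

lemma join_part_disjoint:
  assumes "disjoint P"
  shows "disjoint (join_part M T P n)"
  unfolding disjoint_def
proof (intro ballI impI)
  fix A B assume A: "A \<in> join_part M T P n" and B: "B \<in> join_part M T P n" and AB: "A \<noteq> B"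
  obtain f where f: "A = space M \<inter> (\<Inter>i<n. (T ^^ i) -` f i)" "\<forall>i<n. f i \<in> P"
    using A unfolding join_part_def by auto
  obtain f' where f': "B = space M \<inter> (\<Inter>i<n. (T ^^ i) -` f' i)" "\<forall>i<n. f' i \<in> P"
    using B unfolding join_part_def by auto
  obtain i where i: "i < n" "f i \<noteq> f' i"
  proof (rule ccontr)
    assume "\<not> thesis"
    with that have "\<forall>i<n. f i = f' i" by blast
    hence "A = B" using f f' by auto
    with AB show False by simp
  qed
  have "f i \<inter> f' i = {}" using assms f(2) f'(2) i unfolding disjoint_def by auto
  moreover have "A \<subseteq> (T ^^ i) -` f i" "B \<subseteq> (T ^^ i) -` f' i" using f f' i by auto
  ultimately show "A \<inter> B = {}" by auto
qed

lemma join_part_sum: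
  assumes "prob_space M" "T \<in> M \<rightarrow>\<^sub>M M" "finite_meas_partition M P"
  shows "(\<Sum>A\<in>join_part M T P n. measure M A) \<le> 1"
proof -
  interpret prob_space M by fact
  have P: "finite P" "P \<subseteq> sets M" "disjoint P" using assms(3) by (auto simp: finite_meas_partition_def)
  let ?Q = "join_part M T P n"
  have "measure M (\<Union>?Q) = (\<Sum>A\<in>?Q. measure M A)"
    using join_part_finite(1)[OF P(1), of M T n] join_part_sets[OF assms(2) P(2), of n]
      join_part_disjoint[OF P(3), of M T n]
    by (intro measure_Union') (auto simp: fmeasurable_eq_sets disjoint_def pairwise_def disjnt_def)
  moreover have "measure M (\<Union>?Q) \<le> 1" by simp
  ultimately show ?thesis by simp
qed

theorem mainTheorem5:
  fixes M :: "'a measure" and T :: "'a \<Rightarrow> 'a" and g :: "real \<Rightarrow> real" and P :: "'a set set"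
  assumes "prob_space M"
    and "measure_preserving_map M T"
    and "g \<in> G00 \<union> Gsh"
    and "finite_meas_partition M P"
  shows "hg M T g P = ereal (Cg g) * hg M T eta P"
proof -
  interpret prob_space M by fact
  have Tm: "T \<in> M \<rightarrow>\<^sub>M M" using assms(2) by (simp add: measure_preserving_map_def)
  have P: "finite P" "P \<subseteq> sets M" "disjoint P" using assms(4) by (auto simp: finite_meas_partition_def)
  obtain c where c: "c \<ge> 0" "g \<in> G0" "((\<lambda>x. g x / eta x) \<longlongrightarrow> c) (at_right 0)"
    using assms(3) unfolding G00_def Gsh_def by (auto intro: less_imp_le)
  have Cg: "Cg g = c" unfolding Cg_def by (rule tendsto_Lim[OF trivial_limit_at_right_real c(3)])
  define Q where "Q n = join_part M T P n" for n
  define a where "a n = Hg M eta (Q n) / real n" for n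
  define b where "b n = Hg M g (Q n) / real n" for n
  define B where "B = \<bar>ln (real (card P))\<bar> + 1"
  have B1: "B \<ge> 1" by (simp add: B_def)
  have Qfin: "finite (Q n)" for n using join_part_finite(1)[OF P(1)] by (simp add: Q_def)
  have Qsum: "(\<Sum>A\<in>Q n. measure M A) \<le> 1" for n
    using join_part_sum[OF assms(1) Tm assms(4)] by (simp add: Q_def)
  have m01: "0 \<le> measure M A" "measure M A \<le> 1" for A by auto
  have Hnn: "0 \<le> Hg M eta (Q n)" for n
    unfolding Hg_def using m01 eta_nonneg by (intro sum_nonneg) auto
  have a0: "0 \<le> a n" for n using Hnn by (simp add: a_def)
  have aB: "a n \<le> B" for n
  proof (cases "n = 0 \<or> Q n = {}")
    case True thus ?thesis using B1 by (auto simp: a_def Hg_def)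
  next
    case False
    hence n: "n \<ge> 1" and Qne: "Q n \<noteq> {}" by auto
    have H: "Hg M eta (Q n) \<le> ln (card (Q n)) + 1"
      unfolding Hg_def using Qfin Qsum Qne m01 by (intro sum_eta_bound) auto
    have c1: "card (Q n) \<ge> 1" using Qfin Qne by (simp add: Suc_leI card_gt_0_iff)
    have c2: "card (Q n) \<le> card P ^ n" using join_part_finite(2)[OF P(1)] by (simp add: Q_def)
    have cp: "card P > 0" using c1 c2 by (cases "card P = 0") (use n in \<open>auto simp: power_0_left\<close>)
    have "ln (real (card (Q n))) \<le> ln (real (card P ^ n))"
      using c1 c2 cp by (subst ln_le_cancel_iff) (auto simp del: of_nat_power)
    also have "\<dots> = real n * ln (real (card P))" using cp by (simp add: ln_realpow)
    also have "\<dots> \<le> real n * \<bar>ln (real (card P))\<bar>" by (intro mult_left_mono) auto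
    finally have "Hg M eta (Q n) \<le> real n * \<bar>ln (real (card P))\<bar> + real n * 1" using H n by simp
    hence "Hg M eta (Q n) \<le> real n * B" by (simp add: B_def algebra_simps)
    thus ?thesis using n by (simp add: a_def divide_le_eq mult.commute)
  qed
  have diff: "\<exists>N. \<forall>n\<ge>N. \<bar>b n - c * a n\<bar> \<le> e" if e: "e > 0" for e
  proof -
    define e' where "e' = e / (2 * B)"
    have e': "e' > 0" using e B1 by (simp add: e'_def)
    obtain L where L: "\<And>x. x \<in> {0..1} \<Longrightarrow> \<bar>g x - c * eta x\<bar> \<le> e' * eta x + L * x"
      using approx[OF c(2,3) e'] by blast
    define N where "N = nat (ceiling (2 * \<bar>L\<bar> / e)) + 1"
    have "\<bar>b n - c * a n\<bar> \<le> e" if n: "n \<ge> N" for n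
    proof -
      have n1: "real n \<ge> 1" using n by (simp add: N_def)
      have "Hg M g (Q n) - c * Hg M eta (Q n) = (\<Sum>A\<in>Q n. g (measure M A) - c * eta (measure M A))"
        unfolding Hg_def by (simp add: sum_subtractf sum_distrib_left)
      hence "\<bar>Hg M g (Q n) - c * Hg M eta (Q n)\<bar> \<le> (\<Sum>A\<in>Q n. \<bar>g (measure M A) - c * eta (measure M A)\<bar>)"
        by (simp add: sum_abs)
      also have "\<dots> \<le> (\<Sum>A\<in>Q n. e' * eta (measure M A) + \<bar>L\<bar> * measure M A)"
      proof (intro sum_mono)
        fix A
        have "L * measure M A \<le> \<bar>L\<bar> * measure M A" using m01 by (intro mult_right_mono) auto
        thus "\<bar>g (measure M A) - c * eta (measure M A)\<bar> \<le> e' * eta (measure M A) + \<bar>L\<bar> * measure M A"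
          using L[of "measure M A"] m01[of A] by auto
      qed
      also have "\<dots> = e' * Hg M eta (Q n) + \<bar>L\<bar> * (\<Sum>A\<in>Q n. measure M A)"
        unfolding Hg_def by (simp add: sum.distrib sum_distrib_left)
      also have "\<dots> \<le> e' * Hg M eta (Q n) + \<bar>L\<bar> * 1"
        using Qsum by (intro add_left_mono mult_left_mono) auto
      finally have I: "\<bar>Hg M g (Q n) - c * Hg M eta (Q n)\<bar> \<le> e' * Hg M eta (Q n) + \<bar>L\<bar>" by simp
      have "\<bar>b n - c * a n\<bar> = \<bar>Hg M g (Q n) - c * Hg M eta (Q n)\<bar> / real n"
        using n1 by (simp add: a_def b_def field_simps)
      also have "\<dots> \<le> (e' * Hg M eta (Q n) + \<bar>L\<bar>) / real n"
        using I n1 by (intro divide_right_mono) auto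
      also have "\<dots> = e' * a n + \<bar>L\<bar> / real n" using n1 by (simp add: a_def field_simps)
      also have "\<dots> \<le> e / 2 + e / 2"
      proof (intro add_mono)
        have "e' * a n \<le> e' * B" using aB e' by (intro mult_left_mono) auto
        also have "\<dots> = e / 2" using B1 by (simp add: e'_def)
        finally show "e' * a n \<le> e / 2" .
        have "2 * \<bar>L\<bar> / e \<le> real N" unfolding N_def by linarith
        also have "\<dots> \<le> real n" using n by simp
        finally have "2 * \<bar>L\<bar> \<le> real n * e" using e by (simp add: divide_le_eq)
        thus "\<bar>L\<bar> / real n \<le> e / 2" using n1 by (simp add: divide_le_eq mult.commute)
      qed
      finally show ?thesis by simp
    qed
    thus ?thesis by blast
  qed
  have lim0: "(\<lambda>n. b n - c * a n) \<longlonglongrightarrow> 0"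
  proof (rule LIMSEQ_I)
    fix r :: real assume r: "r > 0"
    obtain N where N: "\<And>n. n \<ge> N \<Longrightarrow> \<bar>b n - c * a n\<bar> \<le> r / 2" using diff[of "r/2"] r by auto
    show "\<exists>N. \<forall>n\<ge>N. norm (b n - c * a n - 0) < r"
    proof (intro exI allI impI)
      fix n assume "n \<ge> N"
      hence "\<bar>b n - c * a n\<bar> \<le> r / 2" by (rule N)
      thus "norm (b n - c * a n - 0) < r" using r by simp
    qed
  qed
  hence lim0': "(\<lambda>n. ereal (b n - c * a n)) \<longlonglongrightarrow> ereal 0" by (simp add: tendsto_ereal)
  have "hg M T g P = limsup (\<lambda>n. ereal (b n))" by (simp add: hg_def b_def Q_def)
  also have "(\<lambda>n. ereal (b n)) = (\<lambda>n. ereal (b n - c * a n) + ereal c * ereal (a n))" by simp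
  also have "limsup \<dots> = ereal 0 + limsup (\<lambda>n. ereal c * ereal (a n))"
    by (rule ereal_limsup_lim_add[OF lim0']) simp
  also have "\<dots> = ereal c * limsup (\<lambda>n. ereal (a n))" using limsup_ereal_mult_left[OF c(1), of "\<lambda>n. ereal (a n)"] by simp
  also have "limsup (\<lambda>n. ereal (a n)) = hg M T eta P" by (simp add: hg_def a_def Q_def)
  finally show ?thesis by (simp add: Cg)
qed

end
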